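(* Consider isobaric vitrification of a system by stepwise cooling of the medium, where at each medium temperature $T_0$ the system is observed for a time $\tau_{\text{obs}}$ before the temperature is lowered again, and suppose $\tau_{\text{obs}}<\tau_{\text{eq}}(T_0)$ for every $T_0<T_{0\text{g}}$. Then the calorimetrically measured (extrapolated) entropy at absolute zero exceeds the entropy of the hypothetical equilibrium supercooled liquid at absolute zero: $$S_{\text{expt}}(0)>S_{\text{SCL}}(0).$$
   Context: The system is in contact with a medium at temperature $T_0$ and fixed pressure $P_0$. $\tau_{\text{eq}}(T_0)$ is the time needed for the system to reach equilibrium (the supercooled liquid, SCL, taken as the equilibrium state; ordered/crystalline states are excluded from consideration) with the medium at $T_0$; $T_{0\text{g}}$ is the temperature at which $\tau_{\text{eq}}$ equals $\tau_{\text{obs}}$, so that above $T_{0\text{g}}$ the system is the equilibrated SCL and below it the system is out of equilibrium. $S_{\text{SCL}}(T_0)$ denotes the entropy of the equilibrium supercooled liquid, hypothetically continued to all $T_0$ down to $0$. The measured entropy is $S_{\text{expt}}(0)=S(T_{0\text{A}})+\int_{T_{0\text{A}}}^{0}C_P\,dT_0/T_0$ for a starting temperature $T_{0\text{A}}\ge T_{0\text{g}}$, where $C_P|dT_0|=|d_{\text{e}}Q|=\int_0^{\tau_{\text{obs}}}|\dot Q_{\text{e}}|\,dt$ is the heat lost to the medium during the observation time at each step, $\dot Q_{\text{e}}=d_{\text{e}}Q/dt$ being the rate of heat exchange with the medium; the SCL heat loss at $T_0$ is the heat lost over $\tau_{\text{eq}}(T_0)$, $\int_0^{\tau_{\text{eq}}(T_0)}|\dot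 Q_{\text{e}}|\,dt$. *)

theory Defs
  imports "HOL-Analysis.Analysis"
begin

text \<open>qd T0 t : rate of heat exchange with the medium at time t after the medium
  temperature has been set to T0 (time measured from the start of the step).\<close>

definition heat_lost :: "(real \<Rightarrow> real \<Rightarrow> real) \<Rightarrow> real \<Rightarrow> real \<Rightarrow> real" where
  "heat_lost qd T0 \<tau> = (LINT t:{0..\<tau>}|lborel. \<bar>qd T0 t\<bar>)"

text \<open>Measured heat capacity: C_P |dT0| = heat lost during the observation time,
  with temperature step size delta.\<close>
definition CP_expt :: "(real \<Rightarrow> real \<Rightarrow> real) \<Rightarrow> real \<Rightarrow> real \<Rightarrow> real \<Rightarrow> real" where
  "CP_expt qd \<delta> \<tau>obs T0 = heat_lost qd T0 \<tau>obs / \<delta>"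

definition CP_SCL :: "(real \<Rightarrow> real \<Rightarrow> real) \<Rightarrow> real \<Rightarrow> (real \<Rightarrow> real) \<Rightarrow> real \<Rightarrow> real" where
  "CP_SCL qd \<delta> \<tau>eq T0 = heat_lost qd T0 (\<tau>eq T0) / \<delta>"

text \<open>S_expt(0) = S(T0A) + int_{T0A}^0 C_P dT0/T0 = S(T0A) - int_0^{T0A} C_P/T0 dT0.\<close>
definition S_expt0 :: "real \<Rightarrow> real \<Rightarrow> (real \<Rightarrow> real) \<Rightarrow> real" where
  "S_expt0 S_A T0A Cp = S_A - (LINT T:{0<..T0A}|lborel. Cp T / T)"

end

theory Submission
  imports Defs
begin

lemma pos_lemma:
  fixes f :: "real \<Rightarrow> real"
  assumes int: "set_integrable lborel A f" and A: "A \<in> sets lborel"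
    and nn: "\<And>x. x \<in> A \<Longrightarrow> 0 \<le> f x"
    and B: "B \<subseteq> A" "B \<in> sets lborel" "emeasure lborel B > 0"
    and pos: "\<And>x. x \<in> B \<Longrightarrow> 0 < f x"
  shows "(LINT x:A|lborel. f x) > 0"
proof -
  let ?g = "\<lambda>x. indicator A x *\<^sub>R f x"
  have gi: "integrable lborel ?g" using int unfolding set_integrable_def .
  have gnn: "AE x in lborel. 0 \<le> ?g x" using nn by (auto simp: indicator_def)
  have ge: "integral\<^sup>L lborel ?g \<ge> 0" by (rule integral_nonneg_AE[OF gnn])
  have ne: "integral\<^sup>L lborel ?g \<noteq> 0"
  proof
    assume "integral\<^sup>L lborel ?g = 0"
    then have "AE x in lborel. ?g x = 0" using integral_nonneg_eq_0_iff_AE[OF gi gnn] by simp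
    then have "AE x in lborel. x \<notin> B"
      by (rule AE_mp) (auto intro!: AE_I2 dest: pos simp: indicator_def subsetD[OF B(1)])
    then have "emeasure lborel B = 0"
      using AE_iff_measurable[OF B(2), of "\<lambda>x. x \<notin> B"] by simp
    then show False using B(3) by simp
  qed
  show ?thesis using ge ne unfolding set_lebesgue_integral_def by linarith
qed

theorem theorem2:
  fixes qd :: "real \<Rightarrow> real \<Rightarrow> real"
    and tau_eq :: "real \<Rightarrow> real"
    and S_SCL :: "real \<Rightarrow> real"
    and tau_obs \<delta> T0g T0A :: real
  assumes step_pos: "\<delta> > 0"
    and obs_pos: "tau_obs > 0"
    and T0g_pos: "T0g > 0"
    and start: "T0A \<ge> T0g"
    and T0g_def: "tau_eq T0g = tau_obs"
    and above_g: "\<forall>T0. T0 \<ge> T0g \<longrightarrow> tau_eq T0 \<le> tau_obs"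
    and below_g: "\<forall>T0. 0 < T0 \<and> T0 < T0g \<longrightarrow> tau_obs < tau_eq T0"
    and equilibrated: "\<forall>T0 t. T0 > 0 \<longrightarrow> t \<ge> tau_eq T0 \<longrightarrow> qd T0 t = 0"
    and relaxing: "\<forall>T0 t. T0 > 0 \<longrightarrow> 0 \<le> t \<longrightarrow> t < tau_eq T0 \<longrightarrow> qd T0 t \<noteq> 0"
    and int_obs: "\<forall>T0. T0 > 0 \<longrightarrow> set_integrable lborel {0..tau_obs} (qd T0)"
    and int_eq: "\<forall>T0. T0 > 0 \<longrightarrow> set_integrable lborel {0..tau_eq T0} (qd T0)"
    and int_CP: "set_integrable lborel {0<..T0A} (\<lambda>T. CP_expt qd \<delta> tau_obs T / T)"
    and int_CP_SCL: "set_integrable lborel {0<..T0A} (\<lambda>T. CP_SCL qd \<delta> tau_eq T / T)"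
    and S_SCL_0: "S_SCL 0 = S_SCL T0A - (LINT T:{0<..T0A}|lborel. CP_SCL qd \<delta> tau_eq T / T)"
  shows "S_expt0 (S_SCL T0A) T0A (CP_expt qd \<delta> tau_obs) > S_SCL 0"
proof -
  have above: "heat_lost qd T tau_obs = heat_lost qd T (tau_eq T)" if "T \<ge> T0g" for T
  proof -
    have T: "T > 0" "tau_eq T \<le> tau_obs" using that T0g_pos above_g by auto
    have "\<And>t. indicator {0..tau_obs} t *\<^sub>R \<bar>qd T t\<bar> = indicator {0..tau_eq T} t *\<^sub>R \<bar>qd T t\<bar>"
      using T equilibrated by (auto simp: indicator_def)
    then show ?thesis unfolding heat_lost_def set_lebesgue_integral_def by (rule Bochner_Integration.integral_cong[OF refl])
  qed
  have below: "heat_lost qd T tau_obs < heat_lost qd T (tau_eq T)" if "0 < T" "T < T0g" for T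
  proof -
    have lt: "tau_obs < tau_eq T" using below_g that by auto
    have ie: "set_integrable lborel {0..tau_eq T} (\<lambda>t. \<bar>qd T t\<bar>)"
      using int_eq that set_integrable_abs by blast
    have i1: "set_integrable lborel {0..tau_obs} (\<lambda>t. \<bar>qd T t\<bar>)"
      by (rule set_integrable_subset[OF ie]) (use lt in auto)
    have i2: "set_integrable lborel {tau_obs<..tau_eq T} (\<lambda>t. \<bar>qd T t\<bar>)"
      by (rule set_integrable_subset[OF ie]) (use lt obs_pos in auto)
    have un: "{0..tau_eq T} = {0..tau_obs} \<union> {tau_obs<..tau_eq T}" using lt obs_pos by auto
    have split: "heat_lost qd T (tau_eq T) = heat_lost qd T tau_obs + (LINT t:{tau_obs<..tau_eq T}|lborel. \<bar>qd T t\<bar>)"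
      unfolding heat_lost_def un by (rule set_integral_Un[OF _ i1 i2]) auto
    have "(LINT t:{tau_obs<..tau_eq T}|lborel. \<bar>qd T t\<bar>) > 0"
      by (rule pos_lemma[OF i2, where B="{tau_obs<..<tau_eq T}"])
        (use lt obs_pos relaxing that in auto)
    then show ?thesis using split by linarith
  qed
  let ?d = "\<lambda>T. CP_SCL qd \<delta> tau_eq T / T - CP_expt qd \<delta> tau_obs T / T"
  have di: "set_integrable lborel {0<..T0A} ?d" using set_integral_diff(1)[OF int_CP_SCL int_CP] .
  have "(LINT T:{0<..T0A}|lborel. ?d T) > 0"
  proof (rule pos_lemma[OF di, where B="{0<..<T0g}"])
    fix x :: real assume x: "x \<in> {0<..T0A}"
    show "0 \<le> ?d x"
    proof (cases "x \<ge> T0g")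
      case True then show ?thesis using above[OF True] by (simp add: CP_SCL_def CP_expt_def)
    next
      case False then have "heat_lost qd x tau_obs < heat_lost qd x (tau_eq x)" using below x by auto
      then show ?thesis using x step_pos
        by (simp add: CP_SCL_def CP_expt_def diff_divide_distrib[symmetric] divide_le_cancel)
    qed
  next
    fix x :: real assume x: "x \<in> {0<..<T0g}"
    then have "heat_lost qd x tau_obs < heat_lost qd x (tau_eq x)" using below by auto
    then show "0 < ?d x" using x step_pos
      by (simp add: CP_SCL_def CP_expt_def diff_divide_distrib[symmetric] divide_pos_pos)
  qed (use start T0g_pos in auto)
  then show ?thesis using set_integral_diff(2)[OF int_CP_SCL int_CP] S_SCL_0
    unfolding S_expt0_def by linarith
qed

end
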